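(* Fix a finite relational schema $\sigma$ and an integer $d\geq 2$, let $\mathbf{C}$ be a class of $\sigma$-databases of degree at most $d$ closed under removing tuples, and let $\mathbf{P}\subseteq\mathbf{C}$ be a property that is hyperfinite on $\mathbf{C}$. Let $\epsilon\in(0,1]$, and let $r\in\mathbb{N}$ and $\lambda\in(0,1]$ be such that for every $\mathcal{D}\in\mathbf{P}$ and $\mathcal{D}'\in\mathbf{C}$, if $\|\operatorname{h}_r(\mathcal{D})-\operatorname{h}_r(\mathcal{D}')\|_1\leq\lambda\min\{|D|,|D'|\}$ then $\mathcal{D}'$ is $\epsilon$-close to $\mathbf{P}$ in the $\operatorname{BDRD}_{+/-}$ model. Suppose the set $\operatorname{h}_r(\mathbf{P})$ is semilinear. Then there exist $n_{\min},n_{\max}\in\mathbb{N}$ and $f,\mu\in(0,1)$ such that for every $\mathcal{D}\in\mathbf{C}$ with $|D|>n_{\max}$: (1) if $\mathcal{D}\in\mathbf{P}$, then there exists $\mathcal{D}'\in\mathbf{P}$ with $n_{\min}\leq|D'|\leq n_{\max}$ and $\|\operatorname{dv}_r(\mathcal{D})-\operatorname{dv}_r(\mathcal{D}')\|_1\leq f-\mu$; and (2) if $\mathcal{D}$ is $\epsilon$-far from $\mathbf{P}$ in the $\operatorname{BDRD}_{+/-}$ model, then every $\mathcal{D}'\in\mathbf{P}$ with $n_{\min}\leq|D'|\leq n_{\max}$ satisfies $\|\operatorname{dv}_r(\mathcal{D})-\operatorname{dv}_r(\mathcal{D}')\|_1>f+\mu$.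
   Context: A schema $\sigma$ is a finite set of relation names with arities in $\mathbb{N}_{\geq 1}$. A $\sigma$-database $\mathcal{D}$ has a finite domain $D$ and a relation $R^{\mathcal{D}}\subseteq D^{\operatorname{ar}(R)}$ for each $R\in\sigma$. The Gaifman graph of $\mathcal{D}$ has vertex set $D$ and an edge between distinct $a,b$ whenever some tuple contains both; distances and connected components refer to it. The degree of an element is the number of tuples containing it; the degree of $\mathcal{D}$ is the maximum. Classes are closed under isomorphism; a property is an isomorphism-closed class. Hyperfinite: an $(\epsilon,k)$-partition of $\mathcal{D}$ on $n$ elements is obtained by removing at most $\epsilon n$ tuples so that every connected component has at most $k$ elements; $\mathbf{P}\subseteq\mathbf{C}$ is hyperfinite on $\mathbf{C}$ if there is a function $\rho$ such that for every $\epsilon\in(0,1]$ and $\mathcal{D}\in\mathbf{P}$ some $(\epsilon,\rho(\epsilon))$-partition of $\mathcal{D}$ lies in $\mathbf{C}$. Neighbourhoods: $N_r(a)$ is the set of elements at distance at most $r$ from $a$; the $r$-neighbourhood of $a$ is $(\mathcal{D}[N_r(a)],a)$; an $r$-type is a centre-preserving isomorphism class of $r$-neighbourhoods; $\operatorname{c}(r)$ is the (finite) number of $r$-types of degree at most $d$ over $\sigma$. $\operatorname{h}_r(\mathcal{D})\in\mathbb{N}^{\operatorname{c}(r)}$ counts the elements of each $r$-type; $\operatorname{dv}_r(\mathcal{D})=\operatorname{h}_r(\mathcal{D})/|D|$; $\operatorname{h}_r(\mathbf{P})=\{\operatorname{h}_r(\mathcal{D})\mid\mathcal{D}\in\mathbf{P}\}$.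 A set $M\subseteq\mathbb{N}^c$ is linear if $M=\{\bar v_0+a_1\bar v_1+\dots+a_k\bar v_k\mid a_i\in\mathbb{N}\}$ for some $\bar v_j\in\mathbb{N}^c$, and semilinear if it is a finite union of linear sets. $\operatorname{BDRD}_{+/-}$ model: $\operatorname{dist}_{+/-}(\mathcal{D},\mathcal{D}')$ is the minimum number of modifications (inserting an element, deleting an element together with all tuples containing it, inserting a tuple, deleting a tuple) applied to $\mathcal{D}$ and $\mathcal{D}'$ to make them isomorphic; they are $\epsilon$-close if $\operatorname{dist}_{+/-}(\mathcal{D},\mathcal{D}')\leq\epsilon d\min\{|D|,|D'|\}$, else $\epsilon$-far; $\mathcal{D}$ is $\epsilon$-close to $\mathbf{P}$ if it is $\epsilon$-close to some member of $\mathbf{P}$, else $\epsilon$-far from $\mathbf{P}$. *)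

theory Defs
  imports Complex_Main
begin

datatype ('r, 'a) db = DB (dom: "'a set") (rel: "'r \<Rightarrow> 'a list set")

definition is_db :: "'r set \<Rightarrow> ('r \<Rightarrow> nat) \<Rightarrow> ('r, 'a) db \<Rightarrow> bool" where
  "is_db \<sigma> ar D \<longleftrightarrow> finite (dom D) \<and> (\<forall>R. R \<notin> \<sigma> \<longrightarrow> rel D R = {}) \<and>
     (\<forall>R\<in>\<sigma>. \<forall>t\<in>rel D R. length t = ar R \<and> set t \<subseteq> dom D)"

definition tuples :: "('r, 'a) db \<Rightarrow> ('r \<times> 'a list) set" where
  "tuples D = {(R, t). t \<in> rel D R}"

definition elem_deg :: "('r, 'a) db \<Rightarrow> 'a \<Rightarrow> nat" where
  "elem_deg D a = card {(R, t). t \<in> rel D R \<and> a \<in> set t}"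

definition deg_le :: "('r, 'a) db \<Rightarrow> nat \<Rightarrow> bool" where
  "deg_le D d \<longleftrightarrow> (\<forall>a\<in>dom D. elem_deg D a \<le> d)"

definition gadj :: "('r, 'a) db \<Rightarrow> 'a \<Rightarrow> 'a \<Rightarrow> bool" where
  "gadj D a b \<longleftrightarrow> a \<noteq> b \<and> (\<exists>R t. t \<in> rel D R \<and> a \<in> set t \<and> b \<in> set t)"

fun nbh :: "('r, 'a) db \<Rightarrow> nat \<Rightarrow> 'a \<Rightarrow> 'a set" where
  "nbh D 0 a = {a}"
| "nbh D (Suc r) a = nbh D r a \<union> {b. \<exists>c\<in>nbh D r a. gadj D c b}"

definition induced :: "('r, 'a) db \<Rightarrow> 'a set \<Rightarrow> ('r, 'a) db" where
  "induced D S = DB S (\<lambda>R. {t \<in> rel D R. set t \<subseteq> S})"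

definition iso_map :: "('a \<Rightarrow> 'b) \<Rightarrow> ('r, 'a) db \<Rightarrow> ('r, 'b) db \<Rightarrow> bool" where
  "iso_map f D E \<longleftrightarrow> bij_betw f (dom D) (dom E) \<and> (\<forall>R. rel E R = map f ` rel D R)"

definition isomorphic :: "('r, 'a) db \<Rightarrow> ('r, 'b) db \<Rightarrow> bool" where
  "isomorphic D E \<longleftrightarrow> (\<exists>f. iso_map f D E)"

text \<open>The r-type of a in D: the centre-preserving isomorphism class of its r-neighbourhood,
  represented as the set of all rooted sigma-databases over nat isomorphic to it.\<close>
definition rtype :: "'r set \<Rightarrow> ('r \<Rightarrow> nat) \<Rightarrow> nat \<Rightarrow> ('r, 'a) db \<Rightarrow> 'a \<Rightarrow> (('r, nat) db \<times> nat) set" where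
  "rtype \<sigma> ar r D a = {(B, b). is_db \<sigma> ar B \<and>
      (\<exists>f. iso_map f (induced D (nbh D r a)) B \<and> f a = b)}"

text \<open>The (finite) set of r-types of degree at most d over sigma; it plays the role of the
  index set {1..c(r)}.\<close>
definition rtypes :: "'r set \<Rightarrow> ('r \<Rightarrow> nat) \<Rightarrow> nat \<Rightarrow> nat \<Rightarrow> (('r, nat) db \<times> nat) set set" where
  "rtypes \<sigma> ar d r = {rtype \<sigma> ar r B b | (B :: (_, nat) db) b. is_db \<sigma> ar B \<and> deg_le B d \<and> b \<in> dom B}"

definition hist :: "'r set \<Rightarrow> ('r \<Rightarrow> nat) \<Rightarrow> nat \<Rightarrow> ('r, 'a) db \<Rightarrow> (('r, nat) db \<times> nat) set \<Rightarrow> nat" where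
  "hist \<sigma> ar r D = (\<lambda>\<tau>. card {a \<in> dom D. rtype \<sigma> ar r D a = \<tau>})"

definition hist_dist :: "'r set \<Rightarrow> ('r \<Rightarrow> nat) \<Rightarrow> nat \<Rightarrow> nat \<Rightarrow> ('r, 'a) db \<Rightarrow> ('r, 'b) db \<Rightarrow> real" where
  "hist_dist \<sigma> ar d r D D' =
     (\<Sum>\<tau>\<in>rtypes \<sigma> ar d r. \<bar>real (hist \<sigma> ar r D \<tau>) - real (hist \<sigma> ar r D' \<tau>)\<bar>)"

definition dv_dist :: "'r set \<Rightarrow> ('r \<Rightarrow> nat) \<Rightarrow> nat \<Rightarrow> nat \<Rightarrow> ('r, 'a) db \<Rightarrow> ('r, 'b) db \<Rightarrow> real" where
  "dv_dist \<sigma> ar d r D D' =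
     (\<Sum>\<tau>\<in>rtypes \<sigma> ar d r. \<bar>real (hist \<sigma> ar r D \<tau>) / real (card (dom D))
                              - real (hist \<sigma> ar r D' \<tau>) / real (card (dom D'))\<bar>)"

definition linear_set :: "'i set \<Rightarrow> ('i \<Rightarrow> nat) set \<Rightarrow> bool" where
  "linear_set I M \<longleftrightarrow> (\<exists>v0 vs. (\<forall>v\<in>set (v0 # vs). \<forall>i. i \<notin> I \<longrightarrow> v i = 0) \<and>
     M = {(\<lambda>i. v0 i + (\<Sum>j<length vs. a j * (vs ! j) i)) | a :: nat \<Rightarrow> nat. True})"

definition semilinear :: "'i set \<Rightarrow> ('i \<Rightarrow> nat) set \<Rightarrow> bool" where
  "semilinear I M \<longleftrightarrow> (\<exists>Ls. finite Ls \<and> (\<forall>L\<in>Ls. linear_set I L) \<and> M = \<Union> Ls)"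

definition mod_step :: "'r set \<Rightarrow> ('r \<Rightarrow> nat) \<Rightarrow> ('r, 'a) db \<Rightarrow> ('r, 'a) db \<Rightarrow> bool" where
  "mod_step \<sigma> ar D E \<longleftrightarrow>
     (\<exists>x. x \<notin> dom D \<and> E = DB (insert x (dom D)) (rel D)) \<or>
     (\<exists>x\<in>dom D. E = DB (dom D - {x}) (\<lambda>R. {t \<in> rel D R. x \<notin> set t})) \<or>
     (\<exists>R\<in>\<sigma>. \<exists>t. length t = ar R \<and> set t \<subseteq> dom D \<and> t \<notin> rel D R \<and>
         E = DB (dom D) ((rel D)(R := insert t (rel D R)))) \<or>
     (\<exists>R t. t \<in> rel D R \<and> E = DB (dom D) ((rel D)(R := rel D R - {t})))"

definition dist_pm :: "'r set \<Rightarrow> ('r \<Rightarrow> nat) \<Rightarrow> ('r, 'a) db \<Rightarrow> ('r, 'a) db \<Rightarrow> nat" where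
  "dist_pm \<sigma> ar D D' = (LEAST k. \<exists>k1 k2 E E'. k = k1 + k2 \<and>
      (mod_step \<sigma> ar ^^ k1) D E \<and> (mod_step \<sigma> ar ^^ k2) D' E' \<and> isomorphic E E')"

definition eps_close :: "'r set \<Rightarrow> ('r \<Rightarrow> nat) \<Rightarrow> nat \<Rightarrow> real \<Rightarrow> ('r, 'a) db \<Rightarrow> ('r, 'a) db \<Rightarrow> bool" where
  "eps_close \<sigma> ar d \<epsilon> D D' \<longleftrightarrow>
     real (dist_pm \<sigma> ar D D') \<le> \<epsilon> * real d * real (min (card (dom D)) (card (dom D')))"

definition close_to :: "'r set \<Rightarrow> ('r \<Rightarrow> nat) \<Rightarrow> nat \<Rightarrow> real \<Rightarrow> ('r, 'a) db \<Rightarrow> ('r, 'a) db set \<Rightarrow> bool" where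
  "close_to \<sigma> ar d \<epsilon> D P \<longleftrightarrow> (\<exists>D'\<in>P. eps_close \<sigma> ar d \<epsilon> D D')"

definition far_from :: "'r set \<Rightarrow> ('r \<Rightarrow> nat) \<Rightarrow> nat \<Rightarrow> real \<Rightarrow> ('r, 'a) db \<Rightarrow> ('r, 'a) db set \<Rightarrow> bool" where
  "far_from \<sigma> ar d \<epsilon> D P \<longleftrightarrow> \<not> close_to \<sigma> ar d \<epsilon> D P"

definition iso_closed :: "'r set \<Rightarrow> ('r \<Rightarrow> nat) \<Rightarrow> ('r, 'a) db set \<Rightarrow> bool" where
  "iso_closed \<sigma> ar K \<longleftrightarrow> (\<forall>D E. D \<in> K \<longrightarrow> is_db \<sigma> ar E \<longrightarrow> isomorphic D E \<longrightarrow> E \<in> K)"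

definition closed_remove_tuples :: "('r, 'a) db set \<Rightarrow> bool" where
  "closed_remove_tuples K \<longleftrightarrow>
     (\<forall>D\<in>K. \<forall>E. dom E = dom D \<and> (\<forall>R. rel E R \<subseteq> rel D R) \<longrightarrow> E \<in> K)"

definition component :: "('r, 'a) db \<Rightarrow> 'a \<Rightarrow> 'a set" where
  "component D a = {b \<in> dom D. (gadj D)\<^sup>*\<^sup>* a b}"

definition is_partition :: "real \<Rightarrow> nat \<Rightarrow> ('r, 'a) db \<Rightarrow> ('r, 'a) db \<Rightarrow> bool" where
  "is_partition \<epsilon> k D D' \<longleftrightarrow> dom D' = dom D \<and> (\<forall>R. rel D' R \<subseteq> rel D R) \<and>
     real (card (tuples D - tuples D')) \<le> \<epsilon> * real (card (dom D)) \<and>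
     (\<forall>a\<in>dom D'. card (component D' a) \<le> k)"

definition hyperfinite_on :: "('r, 'a) db set \<Rightarrow> ('r, 'a) db set \<Rightarrow> bool" where
  "hyperfinite_on P C \<longleftrightarrow> (\<exists>\<rho> :: real \<Rightarrow> nat. \<forall>\<epsilon>. 0 < \<epsilon> \<and> \<epsilon> \<le> 1 \<longrightarrow>
     (\<forall>D\<in>P. \<exists>D'. is_partition \<epsilon> (\<rho> \<epsilon>) D D' \<and> D' \<in> C))"

end

theory Submission
  imports Defs "HOL-Library.FuncSet"
begin

lemma hist_le:
  assumes "finite (dom D)"
  shows "hist \<sigma> ar r D \<tau> \<le> card (dom D)"
  unfolding hist_def using assms by (intro card_mono) auto

lemma card_sum_fibres:
  assumes "finite I" "finite A" "\<forall>a\<in>A. t a \<in> I"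
  shows "card A = (\<Sum>\<tau>\<in>I. card {a\<in>A. t a = \<tau>})"
proof -
  have "A = (\<Union>\<tau>\<in>I. {a\<in>A. t a = \<tau>})" using assms(3) by auto
  then have "card A = card (\<Union>\<tau>\<in>I. {a\<in>A. t a = \<tau>})" by simp
  also have "\<dots> = (\<Sum>\<tau>\<in>I. card {a\<in>A. t a = \<tau>})"
    using assms by (intro card_UN_disjoint) auto
  finally show ?thesis .
qed

lemma card_sum_hist:
  fixes D :: "('r, nat) db"
  assumes "finite (rtypes \<sigma> ar d r)" "is_db \<sigma> ar D" "deg_le D d"
  shows "card (dom D) = (\<Sum>\<tau>\<in>rtypes \<sigma> ar d r. hist \<sigma> ar r D \<tau>)"
  unfolding hist_def
proof (rule card_sum_fibres)
  show "finite (dom D)" using assms(2) by (simp add: is_db_def)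
  show "\<forall>a\<in>dom D. rtype \<sigma> ar r D a \<in> rtypes \<sigma> ar d r"
    using assms(2,3) unfolding rtypes_def by blast
qed (rule assms(1))

lemma key_est:
  fixes v0 :: "'i \<Rightarrow> nat" and vs :: "('i \<Rightarrow> nat) list" and a b :: "nat \<Rightarrow> nat" and q :: real
  assumes "q \<ge> 1" "\<forall>j<length vs. \<bar>real (b j) - q * real (a j)\<bar> \<le> 1"
  shows "(\<Sum>\<tau>\<in>I. \<bar>real (v0 \<tau> + (\<Sum>j<length vs. b j * (vs ! j) \<tau>))
                 - q * real (v0 \<tau> + (\<Sum>j<length vs. a j * (vs ! j) \<tau>))\<bar>)
         \<le> q * (real (\<Sum>\<tau>\<in>I. v0 \<tau>) + real (\<Sum>j<length vs. \<Sum>\<tau>\<in>I. (vs ! j) \<tau>))"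
proof -
  have pw: "\<bar>real (v0 \<tau> + (\<Sum>j<length vs. b j * (vs ! j) \<tau>))
                 - q * real (v0 \<tau> + (\<Sum>j<length vs. a j * (vs ! j) \<tau>))\<bar>
        \<le> q * real (v0 \<tau>) + q * (\<Sum>j<length vs. real ((vs ! j) \<tau>))" for \<tau>
  proof -
    have "real (v0 \<tau> + (\<Sum>j<length vs. b j * (vs ! j) \<tau>))
                 - q * real (v0 \<tau> + (\<Sum>j<length vs. a j * (vs ! j) \<tau>))
          = (1 - q) * real (v0 \<tau>) + (\<Sum>j<length vs. (real (b j) - q * real (a j)) * real ((vs ! j) \<tau>))"
      by (simp add: algebra_simps sum_distrib_left sum_subtractf)
    also have "\<bar>\<dots>\<bar> \<le> \<bar>(1 - q) * real (v0 \<tau>)\<bar> + \<bar>\<Sum>j<length vs. (real (b j) - q * real (a j)) * real ((vs ! j) \<tau>)\<bar>"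
      by (rule abs_triangle_ineq)
    also have "\<bar>(1 - q) * real (v0 \<tau>)\<bar> \<le> q * real (v0 \<tau>)"
      using assms(1) by (simp add: abs_mult mult_right_mono)
    also have "\<bar>\<Sum>j<length vs. (real (b j) - q * real (a j)) * real ((vs ! j) \<tau>)\<bar>
       \<le> (\<Sum>j<length vs. \<bar>(real (b j) - q * real (a j)) * real ((vs ! j) \<tau>)\<bar>)"
      by (rule sum_abs)
    also have "\<dots> \<le> (\<Sum>j<length vs. real ((vs ! j) \<tau>))"
    proof (rule sum_mono)
      fix j assume "j \<in> {..<length vs}"
      then have "\<bar>real (b j) - q * real (a j)\<bar> \<le> 1" using assms(2) by auto
      then show "\<bar>(real (b j) - q * real (a j)) * real ((vs ! j) \<tau>)\<bar> \<le> real ((vs ! j) \<tau>)"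
        by (simp add: abs_mult mult_left_le_one_le mult_right_le_one_le)
    qed
    also have "\<dots> \<le> q * (\<Sum>j<length vs. real ((vs ! j) \<tau>))"
      using assms(1) mult_right_mono[of 1 q "\<Sum>j<length vs. real ((vs ! j) \<tau>)"] by (simp add: sum_nonneg)
    finally show ?thesis by simp
  qed
  have "(\<Sum>\<tau>\<in>I. \<bar>real (v0 \<tau> + (\<Sum>j<length vs. b j * (vs ! j) \<tau>))
                 - q * real (v0 \<tau> + (\<Sum>j<length vs. a j * (vs ! j) \<tau>))\<bar>)
      \<le> (\<Sum>\<tau>\<in>I. q * real (v0 \<tau>) + q * (\<Sum>j<length vs. real ((vs ! j) \<tau>)))"
    by (rule sum_mono) (rule pw)
  also have "\<dots> = q * (real (\<Sum>\<tau>\<in>I. v0 \<tau>) + real (\<Sum>j<length vs. \<Sum>\<tau>\<in>I. (vs ! j) \<tau>))"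
    by (simp add: sum.distrib sum_distrib_left algebra_simps sum.swap[of _ I])
  finally show ?thesis .
qed

theorem theorem9:
  fixes \<sigma> :: "'r set" and ar :: "'r \<Rightarrow> nat" and d r :: nat
    and C P :: "('r, nat) db set" and \<epsilon> lam :: real
  assumes "finite \<sigma>" and "\<forall>R\<in>\<sigma>. ar R \<ge> 1" and "d \<ge> 2"
    and "\<forall>D\<in>C. is_db \<sigma> ar D \<and> deg_le D d"
    and "iso_closed \<sigma> ar C" and "closed_remove_tuples C"
    and "P \<subseteq> C" and "iso_closed \<sigma> ar P"
    and "hyperfinite_on P C"
    and "0 < \<epsilon>" and "\<epsilon> \<le> 1" and "0 < lam" and "lam \<le> 1"
    and "\<forall>D\<in>P. \<forall>D'\<in>C.
           hist_dist \<sigma> ar d r D D' \<le> lam * real (min (card (dom D)) (card (dom D')))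
           \<longrightarrow> close_to \<sigma> ar d \<epsilon> D' P"
    and "semilinear (rtypes \<sigma> ar d r) (hist \<sigma> ar r ` P)"
  shows "\<exists>n_min n_max :: nat. \<exists>f \<mu> :: real. 0 < f \<and> f < 1 \<and> 0 < \<mu> \<and> \<mu> < 1 \<and>
     (\<forall>D\<in>C. card (dom D) > n_max \<longrightarrow>
        (D \<in> P \<longrightarrow> (\<exists>D'\<in>P. n_min \<le> card (dom D') \<and> card (dom D') \<le> n_max \<and>
                              dv_dist \<sigma> ar d r D D' \<le> f - \<mu>)) \<and>
        (far_from \<sigma> ar d \<epsilon> D P \<longrightarrow> (\<forall>D'\<in>P. n_min \<le> card (dom D') \<and> card (dom D') \<le> n_max \<longrightarrow>
                              dv_dist \<sigma> ar d r D D' > f + \<mu>)))"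
proof (cases "finite (rtypes \<sigma> ar d r)")
  case False
  have hd0: "hist_dist \<sigma> ar d r D1 D2 = 0" for D1 :: "('r, nat) db" and D2 :: "('r, nat) db"
    unfolding hist_dist_def using False by simp
  have dv0: "dv_dist \<sigma> ar d r D1 D2 = 0" for D1 :: "('r, nat) db" and D2 :: "('r, nat) db"
    unfolding dv_dist_def using False by simp
  show ?thesis
  proof (cases "P = {}")
    case True
    show ?thesis
      apply (rule exI[of _ 0], rule exI[of _ 0], rule exI[of _ "1/2"], rule exI[of _ "1/4"])
      using True by simp
  next
    case False
    then obtain D0 where D0: "D0 \<in> P" by blast
    have nf: "\<not> far_from \<sigma> ar d \<epsilon> D P" if "D \<in> C" for D
    proof -
      have "hist_dist \<sigma> ar d r D0 D \<le> lam * real (min (card (dom D0)) (card (dom D)))"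
        using hd0 assms(12) by simp
      then show ?thesis using assms(14) D0 that unfolding far_from_def by blast
    qed
    show ?thesis
      apply (rule exI[of _ 0], rule exI[of _ "card (dom D0)"], rule exI[of _ "lam/4"], rule exI[of _ "lam/8"])
      using assms(12,13) D0 nf dv0 by auto
  qed
next
  case True
  define I where "I = rtypes \<sigma> ar d r"
  have finI: "finite I" using True I_def by simp
  have isdb: "is_db \<sigma> ar D \<and> deg_le D d" if "D \<in> C" for D using assms(4) that by blast
  have findom: "finite (dom D)" if "D \<in> C" for D using isdb[OF that] by (simp add: is_db_def)
  have cardsum: "card (dom D) = (\<Sum>\<tau>\<in>I. hist \<sigma> ar r D \<tau>)" if "D \<in> C" for D
    unfolding I_def using card_sum_hist[OF True] isdb[OF that] by blast
  obtain Ls where Ls: "finite Ls" "\<forall>L\<in>Ls. linear_set I L" "hist \<sigma> ar r ` P = \<Union> Ls"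
    using assms(15) unfolding semilinear_def I_def by blast
  have "\<forall>L\<in>Ls. \<exists>p. L = {(\<lambda>i. fst p i + (\<Sum>j<length (snd p). a j * (snd p ! j) i)) | a :: nat \<Rightarrow> nat. True}"
    using Ls(2) unfolding linear_set_def by fastforce
  then obtain F where F: "\<forall>L\<in>Ls. L = {(\<lambda>i. fst (F L) i + (\<Sum>j<length (snd (F L)). a j * (snd (F L) ! j) i)) | a :: nat \<Rightarrow> nat. True}"
    by (rule bchoice[elim_format]) blast
  define c where "c L = real (\<Sum>\<tau>\<in>I. fst (F L) \<tau>) + real (\<Sum>j<length (snd (F L)). \<Sum>\<tau>\<in>I. (snd (F L) ! j) \<tau>)" for L
  define B where "B = (\<Sum>L\<in>Ls. c L)"
  have c0: "c L \<ge> 0" for L unfolding c_def by (simp only: of_nat_0_le_iff add_nonneg_nonneg)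
  have cB: "c L \<le> B" if "L \<in> Ls" for L
    unfolding B_def using Ls(1) that c0 by (intro member_le_sum) auto
  have B0: "B \<ge> 0" unfolding B_def using c0 by (simp add: sum_nonneg)
  define nmin where "nmin = nat \<lceil>8 * B / lam\<rceil> + 1"
  have nmin1: "nmin \<ge> 1" unfolding nmin_def by simp
  have nminB: "8 * B / lam \<le> real nmin" unfolding nmin_def by linarith
  have Bnmin: "B / real nmin \<le> lam / 8"
  proof -
    have "8 * B \<le> lam * real nmin" using nminB assms(12) by (simp add: field_simps)
    then show ?thesis using nmin1 by (simp add: field_simps)
  qed
  define K where "K = 8 * (real (card I) + 1) / lam"
  have K0: "K > 0" unfolding K_def using assms(12) by simp
  define g where "g D = (\<lambda>\<tau>\<in>I. nat \<lfloor>K * (real (hist \<sigma> ar r D \<tau>) / real (card (dom D)))\<rfloor>)" for D :: "('r, nat) db"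
  define S where "S = {D\<in>P. nmin \<le> card (dom D)}"
  have gS: "g ` S \<subseteq> (\<Pi>\<^sub>E \<tau>\<in>I. {0..nat \<lfloor>K\<rfloor>})"
  proof
    fix \<gamma> assume "\<gamma> \<in> g ` S"
    then obtain D where D: "D \<in> S" "\<gamma> = g D" by blast
    have DC: "D \<in> C" using D(1) assms(7) S_def by auto
    have pos: "card (dom D) > 0" using D(1) nmin1 S_def by auto
    have "nat \<lfloor>K * (real (hist \<sigma> ar r D \<tau>) / real (card (dom D)))\<rfloor> \<le> nat \<lfloor>K\<rfloor>" for \<tau>
    proof -
      have "real (hist \<sigma> ar r D \<tau>) \<le> real (card (dom D))" using hist_le[OF findom[OF DC]] by simp
      then have "real (hist \<sigma> ar r D \<tau>) / real (card (dom D)) \<le> 1" using pos by simp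
      then have "K * (real (hist \<sigma> ar r D \<tau>) / real (card (dom D))) \<le> K" using K0
        using mult_left_le[of "real (hist \<sigma> ar r D \<tau>) / real (card (dom D))" K] by linarith
      then show ?thesis by (intro nat_mono floor_mono)
    qed
    then show "\<gamma> \<in> (\<Pi>\<^sub>E \<tau>\<in>I. {0..nat \<lfloor>K\<rfloor>})" unfolding D(2) g_def restrict_PiE_iff by simp
  qed
  have fin_gS: "finite (g ` S)" by (rule finite_subset[OF gS finite_PiE[OF finI]]) simp
  have "\<forall>\<gamma>\<in>g ` S. \<exists>D. D \<in> S \<and> g D = \<gamma>" by (simp add: image_iff) (metis)
  then obtain rep where rep: "\<forall>\<gamma>\<in>g ` S. rep \<gamma> \<in> S \<and> g (rep \<gamma>) = \<gamma>"
    by (rule bchoice[elim_format]) blast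
  define nmax where "nmax = nmin + Max (insert 0 ((\<lambda>\<gamma>. card (dom (rep \<gamma>))) ` g ` S))"
  have grid: "dv_dist \<sigma> ar d r D1 D2 \<le> lam / 8"
    if "D1 \<in> S" "D2 \<in> S" "g D1 = g D2" for D1 D2
  proof -
    have pos1: "card (dom D1) > 0" using that(1) nmin1 S_def by auto
    have pos2: "card (dom D2) > 0" using that(2) nmin1 S_def by auto
    have pw: "\<bar>real (hist \<sigma> ar r D1 \<tau>) / real (card (dom D1)) - real (hist \<sigma> ar r D2 \<tau>) / real (card (dom D2))\<bar> \<le> 1 / K"
      if "\<tau> \<in> I" for \<tau>
    proof -
      define x1 where "x1 = real (hist \<sigma> ar r D1 \<tau>) / real (card (dom D1))"
      define x2 where "x2 = real (hist \<sigma> ar r D2 \<tau>) / real (card (dom D2))"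
      have x0: "x1 \<ge> 0" "x2 \<ge> 0" unfolding x1_def x2_def by auto
      have "nat \<lfloor>K * x1\<rfloor> = nat \<lfloor>K * x2\<rfloor>"
      proof -
        have "g D1 \<tau> = g D2 \<tau>" using \<open>g D1 = g D2\<close> by simp
        then show ?thesis using that unfolding g_def x1_def x2_def by simp
      qed
      moreover have "K * x1 \<ge> 0" "K * x2 \<ge> 0" using x0 K0 by auto
      ultimately have "\<lfloor>K * x1\<rfloor> = \<lfloor>K * x2\<rfloor>" by (simp add: eq_nat_nat_iff)
      then have "\<bar>K * x1 - K * x2\<bar> < 1" by linarith
      then have "K * \<bar>x1 - x2\<bar> < 1" using K0 by (simp add: abs_mult right_diff_distrib[symmetric])
      then have "\<bar>x1 - x2\<bar> \<le> 1 / K" using K0 by (simp add: field_simps)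
      then show ?thesis unfolding x1_def x2_def .
    qed
    have "dv_dist \<sigma> ar d r D1 D2 \<le> (\<Sum>\<tau>\<in>I. 1 / K)"
      unfolding dv_dist_def I_def[symmetric] using pw by (intro sum_mono) auto
    also have "\<dots> = real (card I) / K" by simp
    also have "\<dots> \<le> lam / 8" unfolding K_def using assms(12) by (simp add: field_simps)
    finally show ?thesis .
  qed
  show ?thesis
  proof (rule exI[of _ nmin], rule exI[of _ nmax], rule exI[of _ "lam/4"], rule exI[of _ "lam/8"],
      intro conjI ballI impI allI)
    show "0 < lam / 4" "lam / 4 < 1" "0 < lam / 8" "lam / 8 < 1" using assms(12,13) by auto
  next
    fix D assume DC: "D \<in> C" and big: "nmax < card (dom D)" and DP: "D \<in> P"
    have DS: "D \<in> S" using DP big unfolding S_def nmax_def by auto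
    define D' where "D' = rep (g D)"
    have D'S: "D' \<in> S" and gD': "g D' = g D" using rep DS unfolding D'_def by auto
    have "card (dom D') \<le> Max (insert 0 ((\<lambda>\<gamma>. card (dom (rep \<gamma>))) ` g ` S))"
      using fin_gS DS unfolding D'_def by (intro Max_ge) auto
    then have "card (dom D') \<le> nmax" unfolding nmax_def by simp
    moreover have "dv_dist \<sigma> ar d r D D' \<le> lam / 4 - lam / 8"
      using grid[OF DS D'S gD'[symmetric]] by simp
    ultimately show "\<exists>D'\<in>P. nmin \<le> card (dom D') \<and> card (dom D') \<le> nmax \<and> dv_dist \<sigma> ar d r D D' \<le> lam / 4 - lam / 8"
      using D'S unfolding S_def by auto
  next
    fix D D' assume DC: "D \<in> C" and big: "nmax < card (dom D)" and far: "far_from \<sigma> ar d \<epsilon> D P"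
      and D'P: "D' \<in> P" and band: "nmin \<le> card (dom D') \<and> card (dom D') \<le> nmax"
    show "lam / 4 + lam / 8 < dv_dist \<sigma> ar d r D D'"
    proof (rule ccontr)
      assume "\<not> lam / 4 + lam / 8 < dv_dist \<sigma> ar d r D D'"
      then have small: "dv_dist \<sigma> ar d r D D' \<le> 3 * lam / 8" by simp
      define N where "N = real (card (dom D))"
      define N' where "N' = real (card (dom D'))"
      have D'C: "D' \<in> C" using D'P assms(7) by auto
      have N'pos: "N' \<ge> real nmin" using band N'_def by simp
      have N'0: "N' > 0" using N'pos nmin1 by simp
      have NN': "N \<ge> N'" using big band N_def N'_def by simp
      define q where "q = N / N'"
      have q1: "q \<ge> 1" unfolding q_def using NN' N'0 by simp
      obtain L where L: "L \<in> Ls" "hist \<sigma> ar r D' \<in> L" using Ls(3) D'P by blast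
      define v0 where "v0 = fst (F L)"
      define vs where "vs = snd (F L)"
      have LF: "L = {(\<lambda>i. v0 i + (\<Sum>j<length vs. a j * (vs ! j) i)) | a :: nat \<Rightarrow> nat. True}"
        using F L(1) unfolding v0_def vs_def by blast
      obtain a where ha: "hist \<sigma> ar r D' = (\<lambda>i. v0 i + (\<Sum>j<length vs. a j * (vs ! j) i))"
        using L(2) LF by blast
      define b where "b j = nat \<lfloor>q * real (a j)\<rfloor>" for j
      have bq: "\<forall>j<length vs. \<bar>real (b j) - q * real (a j)\<bar> \<le> 1"
      proof (intro allI impI)
        fix j
        have "q * real (a j) \<ge> 0" using q1 by simp
        then have "real (b j) = real_of_int \<lfloor>q * real (a j)\<rfloor>" unfolding b_def by simp
        then show "\<bar>real (b j) - q * real (a j)\<bar> \<le> 1" by linarith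
      qed
      define h'' where "h'' = (\<lambda>i. v0 i + (\<Sum>j<length vs. b j * (vs ! j) i))"
      have "h'' \<in> hist \<sigma> ar r ` P" using Ls(3) L(1) LF unfolding h''_def by blast
      then obtain D'' where D''P: "D'' \<in> P" and hD'': "hist \<sigma> ar r D'' = h''" by blast
      have D''C: "D'' \<in> C" using D''P assms(7) by auto
      define E where "E = (\<Sum>\<tau>\<in>I. \<bar>real (h'' \<tau>) - q * real (hist \<sigma> ar r D' \<tau>)\<bar>)"
      have "E \<le> q * c L"
        unfolding E_def h''_def ha c_def v0_def[symmetric] vs_def[symmetric]
        by (rule key_est[OF q1 bq])
      also have "\<dots> \<le> q * B" using cB[OF L(1)] q1 by simp
      also have "\<dots> = N * (B / N')" unfolding q_def by simp
      also have "\<dots> \<le> N * (B / real nmin)"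
        using N'pos B0 nmin1 NN' N'0 by (intro mult_left_mono divide_left_mono) auto
      also have "\<dots> \<le> N * (lam / 8)" using Bnmin NN' N'0 by (intro mult_left_mono) auto
      finally have Ebound: "E \<le> N * lam / 8" by simp
      have sumq: "(\<Sum>\<tau>\<in>I. q * real (hist \<sigma> ar r D' \<tau>)) = N"
      proof -
        have "(\<Sum>\<tau>\<in>I. q * real (hist \<sigma> ar r D' \<tau>)) = q * N'"
          unfolding N'_def cardsum[OF D'C] by (simp add: sum_distrib_left)
        then show ?thesis unfolding q_def using N'0 by simp
      qed
      have pwD: "\<bar>q * real (hist \<sigma> ar r D' \<tau>) - real (hist \<sigma> ar r D \<tau>)\<bar>
          = N * \<bar>real (hist \<sigma> ar r D \<tau>) / N - real (hist \<sigma> ar r D' \<tau>) / N'\<bar>" for \<tau>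
      proof -
        have Npos: "N > 0" using NN' N'0 by simp
        have "q * real (hist \<sigma> ar r D' \<tau>) - real (hist \<sigma> ar r D \<tau>)
            = - (N * (real (hist \<sigma> ar r D \<tau>) / N - real (hist \<sigma> ar r D' \<tau>) / N'))"
          unfolding q_def using Npos N'0 by (simp add: field_simps)
        then show ?thesis using Npos by (simp add: abs_mult)
      qed
      have hd: "hist_dist \<sigma> ar d r D'' D \<le> E + N * dv_dist \<sigma> ar d r D D'"
      proof -
        have "hist_dist \<sigma> ar d r D'' D
            \<le> (\<Sum>\<tau>\<in>I. \<bar>real (h'' \<tau>) - q * real (hist \<sigma> ar r D' \<tau>)\<bar>
                     + \<bar>q * real (hist \<sigma> ar r D' \<tau>) - real (hist \<sigma> ar r D \<tau>)\<bar>)"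
          unfolding hist_dist_def I_def[symmetric] hD'' by (intro sum_mono) linarith
        also have "\<dots> = E + N * dv_dist \<sigma> ar d r D D'"
          unfolding E_def sum.distrib pwD dv_dist_def I_def[symmetric] N_def N'_def
          by (simp add: sum_distrib_left)
        finally show ?thesis .
      qed
      have sz: "real (card (dom D'')) \<ge> N - E"
      proof -
        have "real (card (dom D'')) = (\<Sum>\<tau>\<in>I. real (h'' \<tau>))"
          unfolding cardsum[OF D''C] hD'' by simp
        moreover have "(\<Sum>\<tau>\<in>I. real (h'' \<tau>)) \<ge> (\<Sum>\<tau>\<in>I. q * real (hist \<sigma> ar r D' \<tau>)
              - \<bar>real (h'' \<tau>) - q * real (hist \<sigma> ar r D' \<tau>)\<bar>)"
          by (intro sum_mono) linarith
        ultimately show ?thesis unfolding E_def sum_subtractf sumq by linarith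
      qed
      have mn: "real (min (card (dom D'')) (card (dom D))) \<ge> N - E"
      proof -
        have E0: "E \<ge> 0" unfolding E_def by (simp add: sum_nonneg)
        have "real (card (dom D)) \<ge> N - E" using E0 unfolding N_def by simp
        then show ?thesis using sz by (simp only: of_nat_min min_def) simp
      qed
      have "hist_dist \<sigma> ar d r D'' D \<le> N * lam / 8 + N * (3 * lam / 8)"
        using hd Ebound small NN' N'0 mult_left_mono[OF small, of N] by linarith
      also have "\<dots> \<le> lam * (N - N * lam / 8)"
      proof -
        have "N * lam * lam \<le> N * lam * 1" using assms(12,13) NN' N'0
          by (intro mult_left_mono) auto
        moreover have "N * lam \<ge> 0" using assms(12) NN' N'0 by simp
        ultimately show ?thesis by (simp add: algebra_simps)
      qed
      also have "\<dots> \<le> lam * (N - E)" using Ebound assms(12) by (intro mult_left_mono) auto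
      also have "\<dots> \<le> lam * real (min (card (dom D'')) (card (dom D)))"
        using mn assms(12) by (intro mult_left_mono) auto
      finally have "close_to \<sigma> ar d \<epsilon> D P" using assms(14) D''P DC by blast
      then show False using far unfolding far_from_def by blast
    qed
  qed
qed

end
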